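(* Let $S$ be a string of length $n$ over a totally ordered alphabet, with Lyndon array $\lambda$, and let $(i,j,p)$ be a decreasing run in $S$. Then there is exactly one index $i_0\in[i,i+p)$ such that $\lambda[i_0]=p$.
   Context: For $i\in[1,n+1]$, $S_i=S[i..n]$ is the suffix starting at $i$ ($S_{n+1}$ empty); $\prec$ is the lexicographical order induced by the alphabet order. A positive integer $p$ is a period of a nonempty substring $S[i..j]$ if $S[x]=S[x+p]$ for all $x\in[i,j-p]$. A run is a triple $(i,j,p)$ with $1\le i\le j\le n$ such that $p$ is the smallest period of $S[i..j]$, $j-i+1\ge 2p$, and neither $(i-1,j,p)$ (when $i>1$) nor $(i,j+1,p)$ (when $j<n$) satisfies these two properties. A run $(i,j,p)$ is decreasing if $S_i\succ S_{i+p}$. A Lyndon word is a nonempty string that is strictly lexicographically smaller than all of its non-trivial cyclic shifts. The Lyndon array is defined by $\lambda[i]=\max\{j-i+1 \mid j\in[i,n],\ S[i..j] \text{ is a Lyndon word}\}$ for $i\in[1,n]$. *)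

theory Defs
  imports Main
begin

text \<open>Strings are lists over a linearly ordered alphabet; positions are 1-based.\<close>

definition chr :: "'a list \<Rightarrow> nat \<Rightarrow> 'a" where
  "chr S x = S ! (x - 1)"

definition substr :: "'a list \<Rightarrow> nat \<Rightarrow> nat \<Rightarrow> 'a list" where
  "substr S i j = take (Suc j - i) (drop (i - 1) S)"

definition suffix_at :: "'a list \<Rightarrow> nat \<Rightarrow> 'a list" where
  "suffix_at S i = drop (i - 1) S"

definition lex_less :: "'a::linorder list \<Rightarrow> 'a list \<Rightarrow> bool" where
  "lex_less u v = lexordp (<) u v"

definition is_period :: "'a list \<Rightarrow> nat \<Rightarrow> nat \<Rightarrow> nat \<Rightarrow> bool" where
  "is_period S i j p \<longleftrightarrow> 0 < p \<and> (\<forall>x. i \<le> x \<and> x + p \<le> j \<longrightarrow> chr S x = chr S (x + p))"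

definition smallest_period :: "'a list \<Rightarrow> nat \<Rightarrow> nat \<Rightarrow> nat \<Rightarrow> bool" where
  "smallest_period S i j p \<longleftrightarrow> is_period S i j p \<and> (\<forall>q. 0 < q \<and> q < p \<longrightarrow> \<not> is_period S i j q)"

definition run_props :: "'a list \<Rightarrow> nat \<Rightarrow> nat \<Rightarrow> nat \<Rightarrow> bool" where
  "run_props S i j p \<longleftrightarrow> smallest_period S i j p \<and> 2 * p \<le> j - i + 1"

definition is_run :: "'a list \<Rightarrow> nat \<Rightarrow> nat \<Rightarrow> nat \<Rightarrow> bool" where
  "is_run S i j p \<longleftrightarrow> 1 \<le> i \<and> i \<le> j \<and> j \<le> length S \<and> run_props S i j p
     \<and> (i > 1 \<longrightarrow> \<not> run_props S (i - 1) j p)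
     \<and> (j < length S \<longrightarrow> \<not> run_props S i (j + 1) p)"

definition decreasing_run :: "'a::linorder list \<Rightarrow> nat \<Rightarrow> nat \<Rightarrow> nat \<Rightarrow> bool" where
  "decreasing_run S i j p \<longleftrightarrow> is_run S i j p \<and> lex_less (suffix_at S (i + p)) (suffix_at S i)"

definition lyndon :: "'a::linorder list \<Rightarrow> bool" where
  "lyndon w \<longleftrightarrow> w \<noteq> [] \<and> (\<forall>k. 0 < k \<and> k < length w \<longrightarrow> lex_less w (rotate k w))"

definition lyndon_array :: "'a::linorder list \<Rightarrow> nat \<Rightarrow> nat" where
  "lyndon_array S i = Max {j - i + 1 | j. i \<le> j \<and> j \<le> length S \<and> lyndon (substr S i j)}"

end

theory Submission imports Defs "HOL-Library.List_Lexorder" begin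

lemma less_conv: "(xs::'a::linorder list) < ys \<longleftrightarrow> ord_class.lexordp xs ys"
  by (simp add: lexordp_conv_lexord list_less_def)

lemma lex_less_conv: "lex_less (u::'a::linorder list) v \<longleftrightarrow> u < v"
  by (simp add: lex_less_def List.lexordp_def list_less_def)

lemma lex_mismatch:
  fixes xs ys :: "'a::linorder list"
  assumes "take k xs = take k ys" "k < length xs" "k < length ys" "xs ! k < ys ! k"
  shows "xs < ys"
proof -
  have "xs = take k xs @ xs ! k # drop (Suc k) xs" using assms(2) by (rule id_take_nth_drop)
  moreover have "ys = take k xs @ ys ! k # drop (Suc k) ys" using assms by (metis id_take_nth_drop)
  ultimately show ?thesis using assms(4) unfolding less_conv by (metis lexordp_append_left_rightI)
qed

lemma lex_mismatch_D:
  fixes xs ys :: "'a::linorder list"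
  assumes "xs < ys" "take k xs = take k ys" "k < length xs" "k < length ys" "xs ! k \<noteq> ys ! k"
  shows "xs ! k < ys ! k"
proof (rule ccontr)
  assume "\<not> xs ! k < ys ! k"
  then have "ys ! k < xs ! k" using assms(5) by auto
  then have "ys < xs" using lex_mismatch[of k ys xs] assms by auto
  then show False using assms(1) by auto
qed

lemma prefix_less: "ys \<noteq> [] \<Longrightarrow> (xs::'a::linorder list) < xs @ ys"
  unfolding less_conv by (rule lexordp_append_rightI)

lemma append_less_cancel: "(v::'a::linorder list) @ t < v @ x \<Longrightarrow> t < x"
  unfolding less_conv by (rule lexordp_append_leftD) auto

lemma lex_same_len:
  fixes x t a b :: "'a::linorder list"
  assumes "length x = length t" "x @ a < t @ b"
  shows "x \<le> t"
proof (rule ccontr)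
  assume "\<not> x \<le> t"
  then have "t < x" by auto
  then have "(\<exists>c vs. x = t @ c # vs) \<or> (\<exists>us c d vs ws. c < d \<and> t = us @ c # vs \<and> x = us @ d # ws)"
    unfolding less_conv lexordp_iff by blast
  then obtain us c d vs ws where "c < d" "t = us @ c # vs" "x = us @ d # ws"
    using assms(1) by auto
  then have "t @ b < x @ a" unfolding less_conv by (simp add: lexordp_append_left_rightI)
  then show False using assms(2) by auto
qed

lemma lyndon_rot: "lyndon w \<Longrightarrow> w = x @ v \<Longrightarrow> x \<noteq> [] \<Longrightarrow> v \<noteq> [] \<Longrightarrow> w < v @ x"
  unfolding lyndon_def lex_less_conv
  by (metis rotate_append length_greater_0_conv length_append less_add_same_cancel1 add.commute)

lemma lyndon_suffix:
  fixes w :: "'a::linorder list"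
  assumes L: "lyndon w" and w: "w = x @ v" and x: "x \<noteq> []" and v: "v \<noteq> []"
  shows "w < v"
proof (cases "\<exists>t. w = v @ t")
  case True
  then obtain t where t: "w = v @ t" by blast
  have lt: "length t = length x" using t w by (metis add_left_imp_eq length_append add.commute)
  have "t \<noteq> []" using lt x by auto
  have 1: "v @ t < v @ x" using lyndon_rot[OF L w x v] t by simp
  have 2: "t < x" using append_less_cancel[OF 1] .
  have 3: "x @ v < t @ v" using lyndon_rot[OF L t v \<open>t \<noteq> []\<close>] w by simp
  have "x \<le> t" using lex_same_len[OF _ 3] lt by simp
  then show ?thesis using 2 by auto
next
  case False
  have "w \<noteq> v" using w x by auto
  moreover have "\<not> v < w"
  proof
    assume "v < w"
    then obtain us c d vs ws where "c < d" "v = us @ c # vs" "w = us @ d # ws"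
      using False unfolding less_conv lexordp_iff by blast
    then have "v @ x < w" unfolding less_conv by (simp add: lexordp_append_left_rightI)
    then show False using lyndon_rot[OF L w x v] by auto
  qed
  ultimately show ?thesis by auto
qed

lemma substr_len: "1 \<le> a \<Longrightarrow> b \<le> length S \<Longrightarrow> length (substr S a b) = Suc b - a"
  by (simp add: substr_def)

lemma substr_nth: "1 \<le> a \<Longrightarrow> b \<le> length S \<Longrightarrow> t < Suc b - a \<Longrightarrow> substr S a b ! t = chr S (a + t)"
  by (simp add: substr_def chr_def add.commute)

lemma suffix_len: "length (suffix_at S a) = length S - (a - 1)"
  by (simp add: suffix_at_def)

lemma suffix_nth: "1 \<le> a \<Longrightarrow> t < length S - (a - 1) \<Longrightarrow> suffix_at S a ! t = chr S (a + t)"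
  by (simp add: suffix_at_def chr_def add.commute)

lemma lyndon_single: "lyndon [x]"
  by (simp add: lyndon_def)


lemma lyndon_len1: "length w = 1 \<Longrightarrow> lyndon w"
  by (auto simp: lyndon_def)

lemma la_in:
  assumes "1 \<le> k" "k \<le> length S"
  shows "\<exists>m. k \<le> m \<and> m \<le> length S \<and> lyndon (substr S k m) \<and> m - k + 1 = lyndon_array S k"
proof -
  define A where "A = {m - k + 1 | m. k \<le> m \<and> m \<le> length S \<and> lyndon (substr S k m)}"
  have "A \<subseteq> (\<lambda>m. m - k + 1) ` {..length S}" unfolding A_def by auto
  then have fin: "finite A" by (rule finite_subset) simp
  have "lyndon (substr S k k)" using substr_len[OF assms] assms by (intro lyndon_len1) simp
  then have "1 \<in> A" unfolding A_def using assms by force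
  then have "Max A \<in> A" using fin Max_in by blast
  then show ?thesis unfolding A_def lyndon_array_def by auto
qed

lemma la_eq:
  assumes "1 \<le> k" "k + q - 1 \<le> length S" "0 < q" "lyndon (substr S k (k + q - 1))"
    "\<And>m. k + q \<le> m \<Longrightarrow> m \<le> length S \<Longrightarrow> \<not> lyndon (substr S k m)"
  shows "lyndon_array S k = q"
proof -
  define A where "A = {m - k + 1 | m. k \<le> m \<and> m \<le> length S \<and> lyndon (substr S k m)}"
  have "A \<subseteq> (\<lambda>m. m - k + 1) ` {..length S}" unfolding A_def by auto
  then have fin: "finite A" by (rule finite_subset) simp
  have "q \<in> A" unfolding A_def using assms(2,3,4) by (intro CollectI exI[of _ "k + q - 1"]) auto
  moreover have "y \<le> q" if yA: "y \<in> A" for y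
  proof -
    obtain m where "y = m - k + 1" "k \<le> m" "m \<le> length S" "lyndon (substr S k m)"
      using yA unfolding A_def by blast
    moreover then have "m < k + q" using assms(5) by (meson not_less)
    ultimately show ?thesis by simp
  qed
  ultimately have "Max A = q" using fin by (intro Max_eqI) auto
  then show ?thesis unfolding lyndon_array_def A_def .
qed

context
  fixes S :: "'a::linorder list" and i j p :: nat
  assumes dr: "decreasing_run S i j p"
begin

lemma facts:
  "1 \<le> i" "i \<le> j" "j \<le> length S" "0 < p" "2 * p \<le> j - i + 1"
  "\<And>x. i \<le> x \<Longrightarrow> x + p \<le> j \<Longrightarrow> chr S x = chr S (x + p)"
  "\<And>q. 0 < q \<Longrightarrow> q < p \<Longrightarrow> \<not> is_period S i j q"
  "j < length S \<Longrightarrow> \<not> run_props S i (j + 1) p"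
  "suffix_at S (i + p) < suffix_at S i"
  using dr unfolding decreasing_run_def is_run_def run_props_def smallest_period_def is_period_def
    lex_less_conv by auto

definition c :: "nat \<Rightarrow> 'a" where "c r = chr S (i + r mod p)"

lemma chr_c: "i \<le> x \<Longrightarrow> x \<le> j \<Longrightarrow> chr S x = c (x - i)"
proof (induction x rule: less_induct)
  case (less x)
  show ?case
  proof (cases "x - i < p")
    case True
    then show ?thesis using less.prems by (simp add: c_def)
  next
    case False
    then have "i \<le> x - p" "x - p < x" using less.prems facts(4) by auto
    then have "chr S (x - p) = c (x - p - i)" using less by auto
    moreover have "chr S (x - p) = chr S x" using facts(6)[of "x - p"] False less.prems by auto
    moreover have "(x - p - i) mod p = (x - i) mod p" using False
      by (metis diff_commute le_mod_geq not_less)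
    ultimately show ?thesis by (simp add: c_def)
  qed
qed

lemma c_mod: "c (r mod p) = c r"
  by (simp add: c_def)

lemma c_addp: "c (r + p * b) = c r"
  by (simp add: c_def)

definition W :: "nat \<Rightarrow> 'a list" where "W r = map (\<lambda>t. c (r + t)) [0..<p]"

lemma W_len: "length (W r) = p" by (simp add: W_def)

lemma W_nth: "t < p \<Longrightarrow> W r ! t = c (r + t)" by (simp add: W_def)

lemma W_addp: "W (r + p) = W r"
proof -
  have "c (r + p + t) = c (r + t)" for t using c_addp[of "r + t" 1] by (simp add: add.commute add.left_commute)
  then show ?thesis unfolding W_def by simp
qed

lemma substr_W:
  assumes "r < p" shows "substr S (i + r) (i + r + p - 1) = W r"
proof (rule nth_equalityI)
  have "i + r + p - 1 \<le> j" using facts(5) assms by linarith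
  then have le: "i + r + p - 1 \<le> length S" using facts(3) by linarith
  show "length (substr S (i + r) (i + r + p - 1)) = length (W r)"
    using substr_len[OF _ le] facts(1,4) W_len by simp
  fix t assume "t < length (substr S (i + r) (i + r + p - 1))"
  then have t: "t < p" using substr_len[OF _ le] facts(1,4) by simp
  have "substr S (i + r) (i + r + p - 1) ! t = chr S (i + r + t)"
    using substr_nth[OF _ le] t facts(1,4) by simp
  also have "\<dots> = c (r + t)" using chr_c[of "i + r + t"] t \<open>i + r + p - 1 \<le> j\<close> by simp
  finally show "substr S (i + r) (i + r + p - 1) ! t = W r ! t" using W_nth t by simp
qed

lemma rotate_W:
  assumes "d < p" shows "rotate d (W r) = W (r + d)"
proof (rule nth_equalityI)
  have rd: "rotate d (W r) = drop d (W r) @ take d (W r)" using assms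
    by (simp add: rotate_drop_take W_len)
  show "length (rotate d (W r)) = length (W (r + d))" by (simp add: W_len)
  fix t assume "t < length (rotate d (W r))"
  then have t: "t < p" by (simp add: W_len)
  show "rotate d (W r) ! t = W (r + d) ! t"
  proof (cases "t < p - d")
    case True
    then show ?thesis unfolding rd using t assms
      by (simp add: nth_append W_len W_nth add.assoc)
  next
    case False
    then have "rotate d (W r) ! t = c (r + (t - (p - d)))" unfolding rd using t assms
      by (simp add: nth_append W_len W_nth)
    also have "\<dots> = c (r + (t - (p - d)) + p * 1)" by (rule c_addp[symmetric])
    also have "r + (t - (p - d)) + p * 1 = r + d + t" using False t assms by simp
    finally show ?thesis using W_nth t by simp
  qed
qed


lemma c_shift_all:
  assumes "r < p" "d > 0" "\<forall>t<p. c (r + t) = c (r + t + d)"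
  shows "c x = c (x + d)"
proof -
  define t where "t = (x mod p + p - r) mod p"
  have tp: "t < p" using facts(4) by (simp add: t_def)
  have e: "(r + t) mod p = x mod p"
  proof -
    have "(r + t) mod p = (r + (x mod p + p - r)) mod p" unfolding t_def by (simp add: mod_add_right_eq)
    also have "r + (x mod p + p - r) = x mod p + p" using assms(1) by simp
    finally show ?thesis by simp
  qed
  have e2: "(r + t + d) mod p = (x + d) mod p" using e by (metis mod_add_left_eq)
  have "c x = c (r + t)" using e c_mod by metis
  also have "\<dots> = c (r + t + d)" using assms(3) tp by blast
  also have "\<dots> = c (x + d)" using e2 c_mod by metis
  finally show ?thesis .
qed

lemma c_mult: "(\<And>x. c x = c (x + d)) \<Longrightarrow> c x = c (x + d * m)"
proof (induction m)
  case 0 then show ?case by simp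
next
  case (Suc m)
  then have "c x = c (x + d * m)" by blast
  also have "\<dots> = c (x + d * m + d)" using Suc.prems by blast
  finally have "c x = c (x + d * m + d)" .
  moreover have "x + d * Suc m = x + d * m + d" by simp
  ultimately show ?case by metis
qed

lemma W_distinct:
  assumes "r < r'" "r' < p" shows "W r \<noteq> W r'"
proof
  assume eq: "W r = W r'"
  define d where "d = r' - r"
  have d: "0 < d" "d < p" using assms by (auto simp: d_def)
  have "\<forall>t<p. c (r + t) = c (r + t + d)"
  proof (intro allI impI)
    fix t assume "t < p"
    then have "W r ! t = W r' ! t" using eq by simp
    moreover have "W r ! t = c (r + t)" "W r' ! t = c (r' + t)" using \<open>t < p\<close> W_nth by auto
    moreover have "r' + t = r + t + d" using d_def assms by simp
    ultimately show "c (r + t) = c (r + t + d)" by simp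
  qed
  moreover have "r < p" using assms by simp
  ultimately have sh: "\<And>x. c x = c (x + d)" using c_shift_all d(1) by blast
  define g where "g = gcd d p"
  have "d \<noteq> 0" using d by simp
  from bezout_nat[OF this, of p] obtain a b where ab: "d * a = p * b + g" unfolding g_def by blast
  have g0: "0 < g" using d unfolding g_def by simp
  have "g \<le> d" using d unfolding g_def by (simp add: gcd_le1_nat)
  then have g: "0 < g" "g < p" using g0 d by auto
  have cg: "c x = c (x + g)" for x
  proof -
    have "c (x + g) = c (x + g + p * b)" by (rule c_addp[symmetric])
    also have "x + g + p * b = x + d * a" using ab by linarith
    also have "c (x + d * a) = c x" using c_mult[of d x a] sh by metis
    finally show ?thesis by simp
  qed
  have "is_period S i j g"
    unfolding is_period_def
  proof (intro conjI allI impI)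
    show "0 < g" by fact
    fix x assume x: "i \<le> x \<and> x + g \<le> j"
    have 1: "chr S x = c (x - i)" using chr_c x by auto
    have 2: "chr S (x + g) = c (x + g - i)" using chr_c[of "x + g"] x by auto
    have 3: "x + g - i = x - i + g" using x by auto
    show "chr S x = chr S (x + g)" using 1 2 3 cg by metis
  qed
  then show False using facts(7) g by blast
qed

lemma key_lt:
  assumes jn: "j < length S" shows "chr S (j + 1) < chr S (j + 1 - p)"
proof -
  have ne: "chr S (j + 1) \<noteq> chr S (j + 1 - p)"
  proof
    assume eq: "chr S (j + 1) = chr S (j + 1 - p)"
    have per: "is_period S i (j + 1) p"
      unfolding is_period_def
    proof (intro conjI allI impI)
      show "0 < p" using facts(4) .
      fix x assume x: "i \<le> x \<and> x + p \<le> j + 1"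
      show "chr S x = chr S (x + p)"
      proof (cases "x + p \<le> j")
        case True then show ?thesis using facts(6) x by blast
      next
        case False then have "x = j + 1 - p" "x + p = j + 1" using x by auto
        then show ?thesis using eq by simp
      qed
    qed
    have "\<not> is_period S i (j + 1) q" if "0 < q" "q < p" for q
      using facts(7)[OF that] unfolding is_period_def by auto
    then have "run_props S i (j + 1) p" using per facts(5)
      unfolding run_props_def smallest_period_def by auto
    then show False using facts(8) jn by blast
  qed
  define e where "e = j + 1 - p - i"
  have ip: "i + p \<le> j + 1" using facts(5) facts(4) by linarith
  have l1: "e < length (suffix_at S (i + p))" using jn ip facts(1) by (simp add: suffix_len e_def)
  have l2: "e < length (suffix_at S i)" using jn ip facts(1) by (simp add: suffix_len e_def)
  have tk: "take e (suffix_at S (i + p)) = take e (suffix_at S i)"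
  proof (rule nth_equalityI)
    show "length (take e (suffix_at S (i + p))) = length (take e (suffix_at S i))" using l1 l2 by simp
    fix t assume "t < length (take e (suffix_at S (i + p)))"
    then have t: "t < e" using l1 by simp
    have "suffix_at S (i + p) ! t = chr S (i + p + t)" using suffix_nth[of "i + p" t S] l1 t facts(1) unfolding suffix_len by simp
    also have "\<dots> = chr S (i + t)" using facts(6)[of "i + t"] t unfolding e_def by (simp add: add.commute add.left_commute)
    also have "\<dots> = suffix_at S i ! t" using suffix_nth[of i t S] l2 t facts(1) unfolding suffix_len by simp
    finally show "take e (suffix_at S (i + p)) ! t = take e (suffix_at S i) ! t" using t by simp
  qed
  have "suffix_at S (i + p) ! e = chr S (i + p + e)" using suffix_nth[of "i + p" e S] l1 facts(1)
    unfolding suffix_len by simp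
  moreover have "i + p + e = j + 1" using ip unfolding e_def by simp
  ultimately have n1: "suffix_at S (i + p) ! e = chr S (j + 1)" by simp
  have "suffix_at S i ! e = chr S (i + e)" using suffix_nth[of i e S] l2 facts(1)
    unfolding suffix_len by simp
  moreover have "i + e = j + 1 - p" using ip unfolding e_def by simp
  ultimately have n2: "suffix_at S i ! e = chr S (j + 1 - p)" by simp
  show ?thesis using lex_mismatch_D[OF facts(9) tk l1 l2] n1 n2 ne by simp
qed


lemma nonlyndon:
  assumes k: "i \<le> k" "k < i + p" and m: "k + p \<le> m" "m \<le> length S"
  shows "\<not> lyndon (substr S k m)"
proof
  assume L: "lyndon (substr S k m)"
  define w where "w = substr S k m"
  define v where "v = drop p w"
  have k1: "1 \<le> k" using k facts(1) by simp
  have lw: "length w = Suc m - k" unfolding w_def using substr_len[OF k1 m(2)] .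
  have wn: "\<And>t. t < Suc m - k \<Longrightarrow> w ! t = chr S (k + t)" unfolding w_def using substr_nth[OF k1 m(2)] by blast
  have lv: "length v = Suc m - k - p" unfolding v_def using lw by simp
  have vn: "\<And>t. t < Suc m - k - p \<Longrightarrow> v ! t = chr S (k + p + t)"
    unfolding v_def using lw wn by (simp add: add.assoc)
  have "take p w \<noteq> []" using lw facts(4) m by auto
  moreover have "v \<noteq> []" using lv m by auto
  moreover have "w = take p w @ v" unfolding v_def by simp
  ultimately have wv: "w < v" using lyndon_suffix L unfolding w_def by metis
  have kp: "k + p \<le> j" using k facts(5) by linarith
  have "v < w"
  proof (cases "m \<le> j")
    case True
    have "v = take (Suc m - k - p) w"
    proof (rule nth_equalityI)
      show "length v = length (take (Suc m - k - p) w)" using lv lw by simp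
      fix t assume "t < length v"
      then have t: "t < Suc m - k - p" using lv by simp
      have "v ! t = chr S (k + p + t)" using vn t by blast
      also have "\<dots> = chr S (k + t)" using facts(6)[of "k + t"] k t True by (simp add: add.commute add.left_commute)
      also have "\<dots> = w ! t" using wn t by simp
      finally show "v ! t = take (Suc m - k - p) w ! t" using t by simp
    qed
    moreover have "drop (Suc m - k - p) w \<noteq> []" using lw facts(4) m by simp
    ultimately show ?thesis using prefix_less by (metis append_take_drop_id)
  next
    case False
    define e where "e = Suc j - p - k"
    have e1: "e < length v" using lv False kp unfolding e_def by simp
    have e2: "e < length w" using lw False kp unfolding e_def by simp
    have "take e v = take e w"
    proof (rule nth_equalityI)
      show "length (take e v) = length (take e w)" using e1 e2 by simp
      fix t assume "t < length (take e v)"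
      then have t: "t < e" using e1 by simp
      have "v ! t = chr S (k + p + t)" using vn t e1 lv by simp
      also have "\<dots> = chr S (k + t)" using facts(6)[of "k + t"] k t kp unfolding e_def by (simp add: add.commute add.left_commute)
      also have "\<dots> = w ! t" using wn t e2 lw by simp
      finally show "take e v ! t = take e w ! t" using t by simp
    qed
    moreover have "v ! e = chr S (j + 1)"
    proof -
      have "v ! e = chr S (k + p + e)" using vn e1 lv by simp
      moreover have "k + p + e = j + 1" using kp unfolding e_def by simp
      ultimately show ?thesis by simp
    qed
    moreover have "w ! e = chr S (j + 1 - p)"
    proof -
      have "w ! e = chr S (k + e)" using wn e2 lw by simp
      moreover have "k + e = j + 1 - p" using kp unfolding e_def by simp
      ultimately show ?thesis by simp
    qed
    moreover have "j < length S" using False m by simp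
    ultimately show ?thesis using lex_mismatch[OF _ e1 e2] key_lt by simp
  qed
  then show False using wv by simp
qed

lemma W_mod: "W (r mod p) = W r"
  by (simp add: W_def c_def mod_add_left_eq)

lemma lyndon_W: "lyndon (W r) \<longleftrightarrow> (\<forall>d. 0 < d \<and> d < p \<longrightarrow> W r < W (r + d))"
proof -
  have "W r \<noteq> []" using W_len facts(4) by (metis length_greater_0_conv)
  then show ?thesis unfolding lyndon_def lex_less_conv W_len using rotate_W by auto
qed

lemma W_unique:
  assumes "r < p" "r' < p" "lyndon (W r)" "lyndon (W r')" shows "r = r'"
proof (rule ccontr)
  assume ne: "r \<noteq> r'"
  have *: False if "a < b" "b < p" "lyndon (W a)" "lyndon (W b)" for a b
  proof -
    have d1: "0 < b - a \<and> b - a < p" using that by auto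
    have "W a < W (a + (b - a))" using that(3) d1 unfolding lyndon_W by blast
    then have 1: "W a < W b" using that by simp
    have d2: "0 < p - (b - a) \<and> p - (b - a) < p" using that by auto
    have "W b < W (b + (p - (b - a)))" using that(4) d2 unfolding lyndon_W by blast
    moreover have "b + (p - (b - a)) = a + p" using that by simp
    ultimately have "W b < W (a + p)" by metis
    then have "W b < W a" using W_addp by metis
    then show False using 1 by simp
  qed
  show False using ne assms *[of r r'] *[of r' r] by linarith
qed

lemma W_exists: "\<exists>r0 < p. lyndon (W r0)"
proof -
  define M where "M = Min (W ` {..<p})"
  have fin: "finite (W ` {..<p})" by simp
  have ne: "W ` {..<p} \<noteq> {}" using facts(4) by auto
  have "M \<in> W ` {..<p}" unfolding M_def using Min_in[OF fin ne] .
  then obtain r0 where r0: "r0 < p" "W r0 = M" by auto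
  have mn: "W r0 \<le> W r" if "r < p" for r using Min_le[OF fin] that r0 unfolding M_def by auto
  have "lyndon (W r0)" unfolding lyndon_W
  proof (intro allI impI)
    fix d assume d: "0 < d \<and> d < p"
    define r' where "r' = (r0 + d) mod p"
    have r': "r' < p" using facts(4) unfolding r'_def by simp
    have "r' \<noteq> r0"
    proof (cases "r0 + d < p")
      case True then show ?thesis unfolding r'_def using d by simp
    next
      case False
      then have "r' = r0 + d - p" unfolding r'_def using r0 d by (simp add: le_mod_geq)
      then show ?thesis using d r0 False by simp
    qed
    then have "W r0 \<noteq> W r'" using W_distinct r0 r' by (metis linorder_neqE_nat)
    moreover have "W r0 \<le> W r'" using mn r' by simp
    moreover have "W r' = W (r0 + d)" unfolding r'_def by (rule W_mod)
    ultimately show "W r0 < W (r0 + d)" by simp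
  qed
  then show ?thesis using r0 by blast
qed


lemma main: "\<exists>!i0. i \<le> i0 \<and> i0 < i + p \<and> lyndon_array S i0 = p"
proof -
  obtain r0 where r0: "r0 < p" "lyndon (W r0)" using W_exists by blast
  have jp: "i + r0 + p - 1 \<le> j" using facts(5) r0 by linarith
  have ex: "lyndon_array S (i + r0) = p"
  proof (rule la_eq)
    show "1 \<le> i + r0" using facts(1) by simp
    show "i + r0 + p - 1 \<le> length S" using jp facts(3) by simp
    show "0 < p" using facts(4) .
    show "lyndon (substr S (i + r0) (i + r0 + p - 1))" using substr_W r0 by simp
    show "\<And>m. i + r0 + p \<le> m \<Longrightarrow> m \<le> length S \<Longrightarrow> \<not> lyndon (substr S (i + r0) m)"
      using nonlyndon r0 by simp
  qed
  have un: "k = i + r0" if k: "i \<le> k" "k < i + p" "lyndon_array S k = p" for k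
  proof -
    have k1: "1 \<le> k" using k facts(1) by simp
    have kj: "k + p - 1 \<le> j" using facts(5) k by linarith
    obtain m where m: "k \<le> m" "m \<le> length S" "lyndon (substr S k m)" "m - k + 1 = p"
    proof -
      have "k \<le> length S" using kj facts(3,4) by linarith
      then show ?thesis using la_in[OF k1, of S] k(3) that by blast
    qed
    then have "m = k + p - 1" by simp
    then have "lyndon (W (k - i))" using m(3) substr_W[of "k - i"] k by simp
    then have "k - i = r0" using W_unique[OF _ r0(1) _ r0(2)] k by simp
    then show ?thesis using k by simp
  qed
  show ?thesis using ex un r0 by (intro ex1I[of _ "i + r0"]) auto
qed

end

theorem lemma7:
  fixes S :: "'a::linorder list" and i j p :: nat
  assumes "decreasing_run S i j p"
  shows "\<exists>!i0. i \<le> i0 \<and> i0 < i + p \<and> lyndon_array S i0 = p"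
  using main[OF assms] .

end
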